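(* Let $P,Q$ be probability measures on $(\Omega,\mathcal{M})$. For measurable $\rho:\Omega\to[0,\infty]$ and $\beta\ne0$ let $\mathcal{T}^+_\beta(\rho)=\{\tau:\Omega\to[0,\infty]\text{ measurable}: E_P[\tau^\beta]\le E_P[\rho^\beta]\}$ and $\mathcal{T}^-_\beta(\rho)=\{\tau:\Omega\to[0,\infty]\text{ measurable}: E_P[\tau^\beta]\ge E_P[\rho^\beta]\}$. (1) Suppose $Q\ll P$, $\nu>0$, and $\phi_\nu=(dQ/dP)^\nu$. Then $$\sup_{\tau\in\mathcal{T}^+_{1+\nu^{-1}}(\phi_\nu)}\log\int\tau dQ=\log\int\phi_\nu dQ=\inf_{c>1}\Big\{\frac1c\log\int\phi_\nu^cdP+\frac1{c-1}R_{c/(c-1)}(Q\|P)\Big\},$$ the infimum is achieved at $c=1+\nu^{-1}$, and $\log\int\phi_\nu dQ=\nu(1+\nu)R_{1+\nu}(Q\|P)$. (2) Suppose $P\ll Q$, $\nu>1$, $\rho_\nu=(dP/dQ)^\nu$, and $\int(dP/dQ)^{\nu-1}dP<\infty$. Then $$\inf_{\tau\in\mathcal{T}^-_{1-\nu^{-1}}(\rho_\nu)}\log\int\tau dQ=\log\int\rho_\nu dQ=\sup_{c<1,c\ne0}\Big\{\frac1c\log\int\rho_\nu^cdP-\frac1{1-c}R_{1/(1-c)}(P\|Q)\Big\},$$ the supremum is achieved at $c=1-\nu^{-1}$, and $\log\int\rho_\nu dQ=\nu(\nu-1)R_\nu(P\|Q)$. (3) Suppose $P\ll Q$, $\nu\in(0,1)$,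 $\rho_\nu=(dP/dQ)^\nu$. Then $$\inf_{\tau\in\mathcal{T}^+_{1-\nu^{-1}}(\rho_\nu)}\log\int\tau dQ=\log\int\rho_\nu dQ=\sup_{c<1,c\ne0}\Big\{\frac1c\log\int\rho_\nu^cdP-\frac1{1-c}R_{1/(1-c)}(P\|Q)\Big\},$$ the supremum is achieved at $c=1-\nu^{-1}$, and $\log\int\rho_\nu dQ=\nu(\nu-1)R_\nu(P\|Q)$.
   Context: Powers $\tau^c=\exp(c\log\tau)$ with continuous extensions of $\exp,\log$ to extended reals; conventions $-\infty+\infty=\infty$ in upper bounds and $\infty-\infty=-\infty$ in lower bounds. Rényi divergence: let $\nu'$ be a $\sigma$-finite positive measure with $dP=p\,d\nu'$, $dQ=q\,d\nu'$. For $\alpha\in(0,1)$, $R_\alpha(Q\|P)=\frac{1}{\alpha(\alpha-1)}\log\int_{p>0}q^\alpha p^{1-\alpha}\,d\nu'$; for $\alpha>1$, the same formula if $Q\ll P$ and $R_\alpha(Q\|P)=+\infty$ if $Q\not\ll P$; for $\alpha<0$, $R_\alpha(Q\|P)=R_{1-\alpha}(P\|Q)$. *)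

theory Defs
  imports "HOL-Probability.Probability"
begin

definition elog :: "ennreal \<Rightarrow> ereal" where
  "elog t = (if t = 0 then -\<infinity> else if t = \<infinity> then \<infinity> else ereal (ln (enn2real t)))"

text \<open>Power t^c = exp(c log t) with continuous extensions of exp and log.\<close>
definition epow :: "ennreal \<Rightarrow> real \<Rightarrow> ennreal" where
  "epow t c = (if c = 0 then 1
     else if t = 0 then (if c > 0 then 0 else \<infinity>)
     else if t = \<infinity> then (if c > 0 then \<infinity> else 0)
     else ennreal (enn2real t powr c))"

text \<open>Addition conventions: in upper bounds -\<infinity>+\<infinity>=\<infinity>; in lower bounds \<infinity>-\<infinity>=-\<infinity>.\<close>
definition uadd :: "ereal \<Rightarrow> ereal \<Rightarrow> ereal" where
  "uadd a b = (if a = \<infinity> \<or> b = \<infinity> then \<infinity> else a + b)"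

definition ladd :: "ereal \<Rightarrow> ereal \<Rightarrow> ereal" where
  "ladd a b = (if a = -\<infinity> \<or> b = -\<infinity> then -\<infinity> else a + b)"

definition Tplus :: "'a measure \<Rightarrow> real \<Rightarrow> ('a \<Rightarrow> ennreal) \<Rightarrow> ('a \<Rightarrow> ennreal) set" where
  "Tplus P \<beta> \<rho> = {\<tau> \<in> borel_measurable P.
     (\<integral>\<^sup>+x. epow (\<tau> x) \<beta> \<partial>P) \<le> (\<integral>\<^sup>+x. epow (\<rho> x) \<beta> \<partial>P)}"

definition Tminus :: "'a measure \<Rightarrow> real \<Rightarrow> ('a \<Rightarrow> ennreal) \<Rightarrow> ('a \<Rightarrow> ennreal) set" where
  "Tminus P \<beta> \<rho> = {\<tau> \<in> borel_measurable P.
     (\<integral>\<^sup>+x. epow (\<tau> x) \<beta> \<partial>P) \<ge> (\<integral>\<^sup>+x. epow (\<rho> x) \<beta> \<partial>P)}"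

definition renyi_ref :: "'a measure \<Rightarrow> 'a measure \<Rightarrow> 'a measure \<Rightarrow> ('a \<Rightarrow> ennreal) \<Rightarrow> ('a \<Rightarrow> ennreal) \<Rightarrow> bool" where
  "renyi_ref Q P N p q \<longleftrightarrow> sigma_finite_measure N \<and> p \<in> borel_measurable N \<and>
     q \<in> borel_measurable N \<and> P = density N p \<and> Q = density N q"

text \<open>The formula (1/(\<alpha>(\<alpha>-1))) log \<integral>_{p>0} q^\<alpha> p^(1-\<alpha>) dN, for a chosen reference (N,p,q)
  (the value does not depend on the choice).\<close>
definition renyi_core :: "real \<Rightarrow> 'a measure \<Rightarrow> 'a measure \<Rightarrow> ereal" where
  "renyi_core \<alpha> Q P =
    (let t = (SOME t. renyi_ref Q P (fst t) (fst (snd t)) (snd (snd t)));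
         N = fst t; p = fst (snd t); q = snd (snd t)
     in ereal (1 / (\<alpha> * (\<alpha> - 1))) *
        elog (\<integral>\<^sup>+x \<in> {x \<in> space N. p x > 0}. epow (q x) \<alpha> * epow (p x) (1 - \<alpha>) \<partial>N))"

text \<open>Renyi divergence R_\<alpha>(Q||P). Note: absolutely_continuous P Q means Q \<ll> P.
  Not defined (undefined) for \<alpha> \<in> {0,1}, which never occur in the theorem.\<close>
definition renyi :: "real \<Rightarrow> 'a measure \<Rightarrow> 'a measure \<Rightarrow> ereal" where
  "renyi \<alpha> Q P =
    (if 0 < \<alpha> \<and> \<alpha> < 1 then renyi_core \<alpha> Q P
     else if 1 < \<alpha> then (if absolutely_continuous P Q then renyi_core \<alpha> Q P else \<infinity>)
     else if \<alpha> < 0 then (if absolutely_continuous Q P then renyi_core (1 - \<alpha>) P Q else \<infinity>)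
     else undefined)"

end

theory Submission
  imports Defs
begin
lemma measurable_epow0: "(\<lambda>t. epow t c) \<in> borel_measurable (borel :: ennreal measure)"
proof -
  have m: "(\<lambda>t::ennreal. ennreal (enn2real t powr c)) \<in> borel_measurable borel" by measurable
  show ?thesis unfolding epow_def
    apply (rule measurable_If)+
    apply (auto intro!: m)
    done
qed

lemma measurable_epow[measurable]:
  "f \<in> borel_measurable M \<Longrightarrow> (\<lambda>x. epow (f x) c) \<in> borel_measurable M"
  using measurable_compose[OF _ measurable_epow0] by blast

lemma ennreal_3cases:
  fixes x :: ennreal
  obtains "x = 0" | "x = \<infinity>" | r where "r > 0" "x = ennreal r"
proof (cases x)
  case (real r)
  then show ?thesis using that by (cases "r > 0") (auto simp: ennreal_eq_0_iff)
qed (use that in auto)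

lemma epow_ennreal: "r > 0 \<Longrightarrow> epow (ennreal r) c = ennreal (r powr c)"
  by (simp add: epow_def)

lemma epow_top: "epow top c = (if c = 0 then 1 else if c > 0 then \<infinity> else 0)"
  by (simp add: epow_def)

lemma epow_zero: "epow 0 c = (if c = 0 then 1 else if c > 0 then 0 else \<infinity>)"
  by (simp add: epow_def)

lemma epow_1: "epow x 1 = x"
  by (cases x rule: ennreal_3cases) (auto simp: epow_def)

lemma epow_base1: "epow 1 c = 1"
  by (simp add: epow_def)

lemma epow_compose: "epow (epow x a) b = epow x (a * b)"
proof (cases x rule: ennreal_3cases)
  case 1 then show ?thesis
    by (auto simp: epow_def zero_less_mult_iff)
next
  case 2 then show ?thesis
    by (auto simp: epow_def zero_less_mult_iff)
next
  case (3 r)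
  then have "epow x a = ennreal (r powr a)" by (simp add: epow_ennreal)
  moreover have "epow (ennreal (r powr a)) b = ennreal ((r powr a) powr b)"
    using 3 by (simp add: epow_ennreal)
  moreover have "epow x (a * b) = ennreal (r powr (a * b))" using 3 by (simp add: epow_ennreal)
  ultimately show ?thesis by (simp only: powr_powr)
qed

lemma epow_mult_same: "a > 0 \<Longrightarrow> b > 0 \<Longrightarrow> epow x a * epow x b = epow x (a + b)"
  by (cases x rule: ennreal_3cases) (auto simp: epow_def powr_add ennreal_mult)

lemma epow_mult_same_fin: "x \<noteq> top \<Longrightarrow> x \<noteq> 0 \<Longrightarrow> epow x a * epow x b = epow x (a + b)"
proof (cases x rule: ennreal_3cases)
  case (3 r)
  then show ?thesis
    by (simp add: epow_ennreal powr_add ennreal_mult)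
qed auto

lemma epow_mult_fin: "x \<noteq> top \<Longrightarrow> x \<noteq> 0 \<Longrightarrow> y \<noteq> top \<Longrightarrow> y \<noteq> 0 \<Longrightarrow> epow (x * y) c = epow x c * epow y c"
proof (cases x rule: ennreal_3cases)
  case (3 r)
  assume "y \<noteq> top" "y \<noteq> 0"
  then show ?thesis
  proof (cases y rule: ennreal_3cases)
    case (3 s)
    then show ?thesis using \<open>r > 0\<close> \<open>x = ennreal r\<close>
      by (simp add: epow_ennreal powr_mult ennreal_mult[symmetric])
  qed auto
qed auto

lemma epow_mono: "c > 0 \<Longrightarrow> x \<le> y \<Longrightarrow> epow x c \<le> epow y c"
proof (cases y rule: ennreal_3cases)
  case 1
  assume "x \<le> y" then show ?thesis using 1 by simp
next
  case 2
  assume "c > 0" then show ?thesis using 2 by (simp add: epow_def)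
next
  case (3 s)
  assume c: "c > 0" and xy: "x \<le> y"
  note ys = 3
  show ?thesis
  proof (cases x rule: ennreal_3cases)
    case 1 then show ?thesis using c by (simp add: epow_zero)
  next
    case 2 then show ?thesis using xy ys by (simp add: top_unique)
  next
    case (3 r)
    then have "r \<le> s" using xy ys by simp
    then show ?thesis using ys \<open>r > 0\<close> \<open>x = ennreal r\<close> c by (simp add: epow_ennreal ennreal_leI powr_mono2)
  qed
qed

lemma epow_eq_0_iff: "c > 0 \<Longrightarrow> epow x c = 0 \<longleftrightarrow> x = 0"
  by (cases x rule: ennreal_3cases) (auto simp: epow_def)

lemma epow_eq_top_iff: "c > 0 \<Longrightarrow> epow x c = top \<longleftrightarrow> x = top"
  by (cases x rule: ennreal_3cases) (auto simp: epow_def)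

lemma young_real:
  fixes s t a b \<theta> :: real
  assumes "s > 0" "t > 0" "a > 0" "b > 0" "0 < \<theta>" "\<theta> < 1"
  shows "s powr \<theta> * t powr (1 - \<theta>) \<le> (a powr \<theta> * b powr (1 - \<theta>)) * (\<theta> / a * s + (1 - \<theta>) / b * t)"
proof -
  have "(s / a) powr \<theta> * (t / b) powr (1 - \<theta>) \<le> \<theta> * (s / a) + (1 - \<theta>) * (t / b)"
    using assms by (intro Youngs_inequality_0) auto
  then have "(a powr \<theta> * b powr (1 - \<theta>)) * ((s / a) powr \<theta> * (t / b) powr (1 - \<theta>))
      \<le> (a powr \<theta> * b powr (1 - \<theta>)) * (\<theta> * (s / a) + (1 - \<theta>) * (t / b))"
    using assms by (intro mult_left_mono) auto
  moreover have "(a powr \<theta> * b powr (1 - \<theta>)) * ((s / a) powr \<theta> * (t / b) powr (1 - \<theta>))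
      = s powr \<theta> * t powr (1 - \<theta>)"
    using assms by (simp add: powr_divide field_simps)
  ultimately show ?thesis by (simp add: field_simps)
qed

lemma young_pointwise:
  fixes a b \<theta> :: real and p q :: ennreal
  assumes "a > 0" "b > 0" "0 < \<theta>" "\<theta> < 1"
  shows "epow p \<theta> * epow q (1 - \<theta>)
    \<le> ennreal (a powr \<theta> * b powr (1 - \<theta>)) * (ennreal (\<theta> / a) * p + ennreal ((1 - \<theta>) / b) * q)"
proof -
  have C: "a powr \<theta> * b powr (1 - \<theta>) > 0" using assms by simp
  show ?thesis
  proof (cases p rule: ennreal_3cases)
    case 1 then show ?thesis using assms by (simp add: epow_zero)
  next
    case 2
    show ?thesis
    proof (cases "q = 0")
      case True then show ?thesis using assms by (simp add: epow_zero)
    next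
      case False
      have "ennreal (\<theta> / a) * p = \<infinity>" using 2 assms by (simp add: ennreal_mult_eq_top_iff)
      then have "ennreal (a powr \<theta> * b powr (1 - \<theta>)) * (ennreal (\<theta> / a) * p + ennreal ((1 - \<theta>) / b) * q) = \<infinity>"
        using C assms by (simp add: ennreal_mult_eq_top_iff)
      then show ?thesis by simp
    qed
  next
    case (3 s)
    note ps = 3
    show ?thesis
    proof (cases q rule: ennreal_3cases)
      case 1 then show ?thesis using assms by (simp add: epow_zero)
    next
      case 2
      have "ennreal ((1 - \<theta>) / b) * q = \<infinity>" using 2 assms by (simp add: ennreal_mult_eq_top_iff)
      then have "ennreal (a powr \<theta> * b powr (1 - \<theta>)) * (ennreal (\<theta> / a) * p + ennreal ((1 - \<theta>) / b) * q) = \<infinity>"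
        using C assms by (simp add: ennreal_mult_eq_top_iff)
      then show ?thesis by simp
    next
      case (3 t)
      have "epow p \<theta> * epow q (1 - \<theta>) = ennreal (s powr \<theta> * t powr (1 - \<theta>))"
        using ps 3 by (simp add: epow_ennreal ennreal_mult)
      also have "\<dots> \<le> ennreal ((a powr \<theta> * b powr (1 - \<theta>)) * (\<theta> / a * s + (1 - \<theta>) / b * t))"
        using young_real[of s t a b \<theta>] ps 3 assms by (intro ennreal_leI) auto
      also have "\<dots> = ennreal (a powr \<theta> * b powr (1 - \<theta>)) * (ennreal (\<theta> / a) * p + ennreal ((1 - \<theta>) / b) * q)"
        using ps 3 assms by (simp add: ennreal_mult[symmetric] ennreal_plus[symmetric] del: ennreal_plus)
      finally show ?thesis .
    qed
  qed
qed

lemma holder: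
  fixes u v :: "'a \<Rightarrow> ennreal"
  assumes u: "u \<in> borel_measurable M" and v: "v \<in> borel_measurable M" and th: "0 < \<theta>" "\<theta> < 1"
  shows "(\<integral>\<^sup>+x. epow (u x) \<theta> * epow (v x) (1 - \<theta>) \<partial>M)
     \<le> epow (\<integral>\<^sup>+x. u x \<partial>M) \<theta> * epow (\<integral>\<^sup>+x. v x \<partial>M) (1 - \<theta>)"
proof -
  define U where "U = (\<integral>\<^sup>+x. u x \<partial>M)"
  define V where "V = (\<integral>\<^sup>+x. v x \<partial>M)"
  have th1: "1 - \<theta> > 0" using th by simp
  show ?thesis
  proof (cases "U = 0 \<or> V = 0")
    case True
    then have "(AE x in M. u x = 0) \<or> (AE x in M. v x = 0)"
      using u v by (auto simp: U_def V_def nn_integral_0_iff_AE)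
    then have "AE x in M. epow (u x) \<theta> * epow (v x) (1 - \<theta>) = 0"
    proof (elim disjE)
      assume "AE x in M. u x = 0" then show ?thesis
        by eventually_elim (use th in \<open>simp add: epow_zero\<close>)
    next
      assume "AE x in M. v x = 0" then show ?thesis
        by eventually_elim (use th th1 in \<open>simp add: epow_zero\<close>)
    qed
    then have "(\<integral>\<^sup>+x. epow (u x) \<theta> * epow (v x) (1 - \<theta>) \<partial>M) = 0"
      by (subst nn_integral_cong_AE) auto
    then show ?thesis by simp
  next
    case False
    then have U0: "U \<noteq> 0" and V0: "V \<noteq> 0" by auto
    show ?thesis
    proof (cases "U = \<infinity> \<or> V = \<infinity>")
      case True
      have "epow U \<theta> \<noteq> 0" "epow V (1 - \<theta>) \<noteq> 0" using U0 V0 th th1 by (simp_all add: epow_eq_0_iff)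
      moreover have "epow U \<theta> = \<infinity> \<or> epow V (1 - \<theta>) = \<infinity>" using True th th1 by (auto simp: epow_def)
      ultimately have "epow U \<theta> * epow V (1 - \<theta>) = \<infinity>" by (auto simp: ennreal_mult_eq_top_iff)
      then show ?thesis by (simp add: U_def V_def)
    next
      case False
      then obtain a b where a: "a > 0" "U = ennreal a" and b: "b > 0" "V = ennreal b"
        using U0 V0 by (metis ennreal_3cases)
      define C where "C = a powr \<theta> * b powr (1 - \<theta>)"
      have "(\<integral>\<^sup>+x. epow (u x) \<theta> * epow (v x) (1 - \<theta>) \<partial>M)
          \<le> (\<integral>\<^sup>+x. ennreal C * (ennreal (\<theta> / a) * u x + ennreal ((1 - \<theta>) / b) * v x) \<partial>M)"
        unfolding C_def using a b th by (intro nn_integral_mono young_pointwise) auto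
      also have "\<dots> = ennreal C * (ennreal (\<theta> / a) * U + ennreal ((1 - \<theta>) / b) * V)"
        using u v by (simp add: nn_integral_cmult nn_integral_add U_def V_def)
      also have "\<dots> = ennreal C"
        using a b th by (simp add: ennreal_mult[symmetric] ennreal_plus[symmetric] del: ennreal_plus)
      also have "\<dots> = epow U \<theta> * epow V (1 - \<theta>)"
        using a b by (simp add: C_def epow_ennreal ennreal_mult)
      finally show ?thesis by (simp add: U_def V_def)
    qed
  qed
qed

lemma ref_pointwise:
  fixes p f :: ennreal and \<alpha> :: real
  assumes "\<alpha> > 0" "p \<noteq> \<infinity>" "p \<noteq> 0"
  shows "epow (p * f) \<alpha> * epow p (1 - \<alpha>) = p * epow f \<alpha>"
proof -
  obtain r where r: "r > 0" "p = ennreal r" using assms by (metis ennreal_3cases)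
  show ?thesis
  proof (cases f rule: ennreal_3cases)
    case 1 then show ?thesis using assms by (simp add: epow_zero)
  next
    case 2
    have "p * f = \<infinity>" using 2 r by (simp add: ennreal_mult_eq_top_iff)
    moreover have "epow p (1 - \<alpha>) \<noteq> 0" using r by (simp add: epow_ennreal)
    ultimately show ?thesis using 2 r assms by (simp add: epow_def ennreal_mult_eq_top_iff)
  next
    case (3 s)
    have pf: "p * f = ennreal (r * s)" using r 3 by (simp add: ennreal_mult)
    have e1: "epow (p * f) \<alpha> = ennreal ((r * s) powr \<alpha>)"
      unfolding pf by (rule epow_ennreal) (use r 3 in simp)
    have e2: "epow p (1 - \<alpha>) = ennreal (r powr (1 - \<alpha>))"
      unfolding r(2) by (rule epow_ennreal) (use r in simp)
    have "epow (p * f) \<alpha> * epow p (1 - \<alpha>) = ennreal ((r * s) powr \<alpha> * r powr (1 - \<alpha>))"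
      unfolding e1 e2 by (simp add: ennreal_mult)
    also have "(r * s) powr \<alpha> * r powr (1 - \<alpha>) = r * s powr \<alpha>"
      using r 3 by (simp add: powr_mult powr_diff field_simps)
    finally show ?thesis using r 3 by (simp add: epow_ennreal ennreal_mult)
  qed
qed

lemma ref_indep:
  assumes N: "sigma_finite_measure N" and p: "p \<in> borel_measurable N" and q: "q \<in> borel_measurable N"
    and Y: "Y = density N p" and X: "X = density N q" and finY: "finite_measure Y"
    and ac: "absolutely_continuous Y X" and sXY: "sets X = sets Y" and a: "\<alpha> > 0"
  shows "(\<integral>\<^sup>+x \<in> {x \<in> space N. p x > 0}. epow (q x) \<alpha> * epow (p x) (1 - \<alpha>) \<partial>N)
       = (\<integral>\<^sup>+x. epow (RN_deriv Y X x) \<alpha> \<partial>Y)"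
proof -
  interpret N: sigma_finite_measure N by fact
  interpret Y: finite_measure Y by fact
  interpret Ys: sigma_finite_measure Y by (rule Y.sigma_finite_measure)
  define f where "f = RN_deriv Y X"
  have sYN: "sets Y = sets N" using Y by simp
  have fY: "f \<in> borel_measurable Y" unfolding f_def by simp
  have fN: "f \<in> borel_measurable N" using fY measurable_cong_sets[OF sYN refl] by blast
  have "density N q = density N (\<lambda>x. p x * f x)"
  proof -
    have "density N q = X" using X by simp
    also have "\<dots> = density Y f" unfolding f_def using Y.density_RN_deriv[OF ac sXY] by simp
    also have "\<dots> = density N (\<lambda>x. p x * f x)" using Y density_density_eq[OF p fN] by simp
    finally show ?thesis .
  qed
  then have qeq: "AE x in N. q x = p x * f x"
    using N.density_unique_iff[OF q] p fN by auto
  have "emeasure Y (space Y) \<noteq> \<infinity>" by simp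
  then have "(\<integral>\<^sup>+x. p x \<partial>N) \<noteq> \<infinity>"
    using Y p by (simp add: emeasure_density)
  then have pfin: "AE x in N. p x \<noteq> \<infinity>" using nn_integral_PInf_AE[OF p] by simp
  have "(\<integral>\<^sup>+x \<in> {x \<in> space N. p x > 0}. epow (q x) \<alpha> * epow (p x) (1 - \<alpha>) \<partial>N)
      = (\<integral>\<^sup>+x. p x * epow (f x) \<alpha> \<partial>N)"
  proof (rule nn_integral_cong_AE)
    show "AE x in N. epow (q x) \<alpha> * epow (p x) (1 - \<alpha>) * indicator {x \<in> space N. p x > 0} x
        = p x * epow (f x) \<alpha>"
      using qeq pfin AE_space
    proof eventually_elim
      case (elim x)
      show ?case
      proof (cases "p x = 0")
        case True then show ?thesis by (simp add: indicator_def)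
      next
        case False
        then have "p x > 0" by (simp add: zero_less_iff_neq_zero)
        then show ?thesis using elim ref_pointwise[OF a, of "p x" "f x"] False
          by (simp add: indicator_def)
      qed
    qed
  qed
  also have "\<dots> = (\<integral>\<^sup>+x. epow (f x) \<alpha> \<partial>Y)"
    using Y p fN by (simp add: nn_integral_density)
  finally show ?thesis unfolding f_def .
qed

lemma renyi_core_eq:
  assumes Y: "prob_space Y" and X: "prob_space X" and sXY: "sets X = sets Y"
    and ac: "absolutely_continuous Y X" and a: "\<alpha> > 0"
  shows "renyi_core \<alpha> X Y = ereal (1 / (\<alpha> * (\<alpha> - 1))) * elog (\<integral>\<^sup>+x. epow (RN_deriv Y X x) \<alpha> \<partial>Y)"
proof -
  interpret Y: prob_space Y by fact
  let ?S = "\<lambda>t. renyi_ref X Y (fst t) (fst (snd t)) (snd (snd t))"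
  have "?S (Y, (\<lambda>_. 1), RN_deriv Y X)"
    unfolding renyi_ref_def using Y.density_RN_deriv[OF ac sXY] Y.sigma_finite_measure_axioms
    by (simp add: density_1)
  then have S: "?S (SOME t. ?S t)" by (rule someI)
  define t where "t = (SOME t. ?S t)"
  have S': "renyi_ref X Y (fst t) (fst (snd t)) (snd (snd t))" using S unfolding t_def .
  have eq: "(\<integral>\<^sup>+x \<in> {x \<in> space (fst t). fst (snd t) x > 0}. epow (snd (snd t) x) \<alpha> * epow (fst (snd t) x) (1 - \<alpha>) \<partial>(fst t))
       = (\<integral>\<^sup>+x. epow (RN_deriv Y X x) \<alpha> \<partial>Y)"
  proof (rule ref_indep[OF _ _ _ _ _ Y.finite_measure_axioms ac sXY a])
    show "sigma_finite_measure (fst t)" "fst (snd t) \<in> borel_measurable (fst t)"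
      "snd (snd t) \<in> borel_measurable (fst t)" "Y = density (fst t) (fst (snd t))"
      "X = density (fst t) (snd (snd t))"
      using S' unfolding renyi_ref_def by blast+
  qed
  show ?thesis
    unfolding renyi_core_def Let_def t_def[symmetric] eq ..
qed

lemma renyi_eq:
  assumes Y: "prob_space Y" and X: "prob_space X" and sXY: "sets X = sets Y"
    and ac: "absolutely_continuous Y X" and a: "\<alpha> > 0" "\<alpha> \<noteq> 1"
  shows "renyi \<alpha> X Y = ereal (1 / (\<alpha> * (\<alpha> - 1))) * elog (\<integral>\<^sup>+x. epow (RN_deriv Y X x) \<alpha> \<partial>Y)"
  using renyi_core_eq[OF Y X sXY ac a(1)] a ac unfolding renyi_def by auto

lemma elog_ennreal: "r > 0 \<Longrightarrow> elog (ennreal r) = ereal (ln r)"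
  by (simp add: elog_def)

lemma elog_top: "elog top = \<infinity>"
  by (simp add: elog_def)

lemma elog_zero: "elog 0 = -\<infinity>"
  by (simp add: elog_def)

lemma elog_mono: "x \<le> y \<Longrightarrow> elog x \<le> elog y"
proof (cases x rule: ennreal_3cases)
  case 1 then show ?thesis by (simp add: elog_def)
next
  case 2
  assume "x \<le> y" then have "y = \<infinity>" using 2 by (simp add: top_unique)
  then show ?thesis by (simp add: elog_def)
next
  case (3 r)
  note xr = 3
  assume xy: "x \<le> y"
  show ?thesis
  proof (cases y rule: ennreal_3cases)
    case 1 then show ?thesis using xy xr by simp
  next
    case 2 then show ?thesis by (simp add: elog_def)
  next
    case (3 s)
    then have "r \<le> s" using xy xr by simp
    then show ?thesis using xr 3 by (simp add: elog_ennreal)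
  qed
qed

lemma elog_neq_minf: "x \<noteq> 0 \<Longrightarrow> elog x \<noteq> -\<infinity>"
  by (simp add: elog_def)

lemma ennreal_finpos:
  fixes x :: ennreal
  assumes "x \<noteq> 0" "x \<noteq> top"
  obtains r where "r > 0" "x = ennreal r"
  by (cases x rule: ennreal_3cases) (use assms that in auto)

lemma le_ennreal_finpos:
  fixes x :: ennreal
  assumes "x \<noteq> 0" "x \<le> ennreal r"
  obtains s where "s > 0" "x = ennreal s" "s \<le> r"
proof -
  have r: "r \<ge> 0"
  proof (rule ccontr)
    assume "\<not> r \<ge> 0" then have "ennreal r = 0" by (simp add: ennreal_eq_0_iff)
    then show False using assms by simp
  qed
  have "x \<noteq> top" using assms(2) by (auto simp: top_unique)
  then obtain s where s: "s > 0" "x = ennreal s" using assms(1) ennreal_finpos by blast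
  then have "s \<le> r" using assms(2) r by simp
  then show ?thesis using s that by blast
qed

lemma logH_plus:
  fixes I K J :: ennreal and \<theta> :: real
  assumes I0: "I \<noteq> 0" and th: "0 < \<theta>" "\<theta> < 1"
    and H: "I \<le> epow K \<theta> * epow J (1 - \<theta>)"
  shows "elog I \<le> uadd (ereal \<theta> * elog K) (ereal (1 - \<theta>) * elog J)"
proof (cases "K = top \<or> J = top")
  case True
  then have "ereal \<theta> * elog K = \<infinity> \<or> ereal (1 - \<theta>) * elog J = \<infinity>"
    using th by (auto simp: elog_top)
  then show ?thesis by (auto simp: uadd_def)
next
  case False
  have K0: "K \<noteq> 0"
  proof
    assume "K = 0" then have "I \<le> 0" using H th by (simp add: epow_zero)
    then show False using I0 by simp
  qed
  have J0: "J \<noteq> 0"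
  proof
    assume "J = 0" then have "I \<le> 0" using H th by (simp add: epow_zero)
    then show False using I0 by simp
  qed
  obtain k where k: "k > 0" "K = ennreal k" using K0 False ennreal_finpos by blast
  obtain j where j: "j > 0" "J = ennreal j" using J0 False ennreal_finpos by blast
  have "I \<le> ennreal (k powr \<theta> * j powr (1 - \<theta>))"
    using H k j by (simp add: epow_ennreal ennreal_mult)
  then obtain i where i: "i > 0" "I = ennreal i" "i \<le> k powr \<theta> * j powr (1 - \<theta>)"
    using le_ennreal_finpos[OF I0] by blast
  have "ln i \<le> ln (k powr \<theta> * j powr (1 - \<theta>))" using i k j by simp
  also have "\<dots> = \<theta> * ln k + (1 - \<theta>) * ln j" using k j by (simp add: ln_mult ln_powr)
  finally show ?thesis using i k j by (simp add: elog_ennreal uadd_def)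
qed

lemma uadd_split:
  assumes "e \<noteq> -\<infinity>" "a > 0" "b > 0" "a + b = 1"
  shows "uadd (ereal a * e) (ereal b * e) = e"
proof (cases e)
  case (real r)
  then have "ereal a * e + ereal b * e = ereal ((a + b) * r)" by (simp add: algebra_simps)
  then show ?thesis using real assms by (simp add: uadd_def)
qed (use assms in \<open>auto simp: uadd_def\<close>)

lemma ladd_split:
  assumes "a \<noteq> 0" "r > 0"
  shows "ladd (ereal (1 / a) * elog (ennreal r)) (- (ereal ((1 - a) / a) * elog (ennreal r))) = elog (ennreal r)"
proof -
  have "ereal (1 / a) * ereal (ln r) + - (ereal ((1 - a) / a) * ereal (ln r)) = ereal (ln r)"
    using assms by (simp add: field_simps)
  then show ?thesis using assms by (simp add: elog_ennreal ladd_def)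
qed

lemma logG1:
  fixes K A J :: ennreal and c :: real
  assumes A: "A \<noteq> 0" "A \<noteq> top" and J0: "J \<noteq> 0" and c: "0 < c" "c < 1"
    and H: "K \<le> epow A c * epow J (1 - c)"
  shows "ladd (ereal (1 / c) * elog K) (- (ereal ((1 - c) / c) * elog J)) \<le> elog A"
proof (cases "J = top")
  case True
  then have "- (ereal ((1 - c) / c) * elog J) = -\<infinity>" using c by (simp add: elog_top)
  then show ?thesis by (simp add: ladd_def)
next
  case False
  show ?thesis
  proof (cases "K = 0")
    case True
    then have "ereal (1 / c) * elog K = -\<infinity>" using c by (simp add: elog_zero)
    then show ?thesis by (simp add: ladd_def)
  next
    case K0: False
    obtain a where a: "a > 0" "A = ennreal a" using A ennreal_finpos by blast
    obtain j where j: "j > 0" "J = ennreal j" using J0 False ennreal_finpos by blast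
    have "K \<le> ennreal (a powr c * j powr (1 - c))"
      using H a j by (simp add: epow_ennreal ennreal_mult)
    then obtain k where k: "k > 0" "K = ennreal k" "k \<le> a powr c * j powr (1 - c)"
      using le_ennreal_finpos[OF K0] by blast
    have "ln k \<le> ln (a powr c * j powr (1 - c))" using k a j by simp
    also have "\<dots> = c * ln a + (1 - c) * ln j" using a j by (simp add: ln_mult ln_powr)
    finally have "ln k \<le> c * ln a + (1 - c) * ln j" .
    then have "ln k / c - (1 - c) / c * ln j \<le> ln a"
      using c by (simp add: field_simps)
    then show ?thesis using a j k by (simp add: elog_ennreal ladd_def)
  qed
qed

lemma logG2:
  fixes K A J :: ennreal and c :: real
  assumes A: "A \<noteq> 0" "A \<noteq> top" and J0: "J \<noteq> 0" and c: "c < 0"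
    and H: "J \<le> epow K (1 / (1 - c)) * epow A (1 - 1 / (1 - c))"
  shows "ladd (ereal (1 / c) * elog K) (- (ereal ((1 - c) / c) * elog J)) \<le> elog A"
proof (cases "K = top")
  case True
  then have "ereal (1 / c) * elog K = -\<infinity>" using c by (simp add: elog_top)
  then show ?thesis by (simp add: ladd_def)
next
  case False
  have al: "1 / (1 - c) > 0" "1 - 1 / (1 - c) > 0" using c by (auto simp: field_simps)
  have K0: "K \<noteq> 0"
  proof
    assume "K = 0" then have "J \<le> 0" using H al by (simp add: epow_zero)
    then show False using J0 by simp
  qed
  obtain a where a: "a > 0" "A = ennreal a" using A ennreal_finpos by blast
  obtain k where k: "k > 0" "K = ennreal k" using K0 False ennreal_finpos by blast
  have "J \<le> ennreal (k powr (1 / (1 - c)) * a powr (1 - 1 / (1 - c)))"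
    using H a k by (simp add: epow_ennreal ennreal_mult)
  then obtain j where j: "j > 0" "J = ennreal j" "j \<le> k powr (1 / (1 - c)) * a powr (1 - 1 / (1 - c))"
    using le_ennreal_finpos[OF J0] by blast
  have "ln j \<le> ln (k powr (1 / (1 - c)) * a powr (1 - 1 / (1 - c)))" using k a j by simp
  also have "\<dots> = ln k / (1 - c) + (1 - 1 / (1 - c)) * ln a" using a k by (simp add: ln_mult ln_powr)
  finally have "ln j \<le> ln k / (1 - c) + (1 - 1 / (1 - c)) * ln a" .
  then have "(1 - c) * ln j \<le> (1 - c) * (ln k / (1 - c) + (1 - 1 / (1 - c)) * ln a)"
    using c by (intro mult_left_mono) auto
  also have "(1 - c) * (ln k / (1 - c) + (1 - 1 / (1 - c)) * ln a) = ln k - c * ln a"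
  proof -
    have aux: "\<And>d x y :: real. d \<noteq> 0 \<Longrightarrow> d * (x / d + (1 - 1 / d) * y) = x + (d - 1) * y"
      by (simp add: field_simps)
    show ?thesis using aux[of "1 - c" "ln k" "ln a"] c by simp
  qed
  finally have "(1 - c) * ln j \<le> ln k - c * ln a" .
  then have "ln k / c - (1 - c) / c * ln j \<le> ln a"
    using c by (simp add: field_simps)
  then show ?thesis using a j k by (simp add: elog_ennreal ladd_def)
qed

lemma ge_from_holder:
  fixes A T :: ennreal and \<theta> :: real
  assumes A: "A \<noteq> 0" "A \<noteq> top" and th: "0 < \<theta>" "\<theta> < 1"
    and H: "A \<le> epow T \<theta> * epow A (1 - \<theta>)"
  shows "A \<le> T"
proof (cases "T = top")
  case True then show ?thesis by simp
next
  case False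
  have T0: "T \<noteq> 0"
  proof
    assume "T = 0" then have "A \<le> 0" using H th by (simp add: epow_zero)
    then show False using A by simp
  qed
  obtain a where a: "a > 0" "A = ennreal a" using A ennreal_finpos by blast
  obtain t where t: "t > 0" "T = ennreal t" using T0 False ennreal_finpos by blast
  have "a \<le> t powr \<theta> * a powr (1 - \<theta>)"
    using H a t by (simp add: epow_ennreal ennreal_mult[symmetric] del: ennreal_mult)
  then have "a powr \<theta> * a powr (1 - \<theta>) \<le> t powr \<theta> * a powr (1 - \<theta>)"
    using a by (simp add: powr_add[symmetric])
  then have "a powr \<theta> \<le> t powr \<theta>" using a by simp
  then have "(a powr \<theta>) powr (1 / \<theta>) \<le> (t powr \<theta>) powr (1 / \<theta>)"
    by (rule powr_mono2[rotated 2]) (use th a in auto)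
  moreover have "(a powr \<theta>) powr (1 / \<theta>) = a" "(t powr \<theta>) powr (1 / \<theta>) = t"
    using th a t by (simp_all add: powr_powr)
  ultimately have "a \<le> t" by simp
  then show ?thesis using a t by simp
qed

lemma part1_core:
  fixes P Q :: "'a measure" and \<nu> :: real and \<phi> :: "'a \<Rightarrow> ennreal" and L :: ereal and F :: "real \<Rightarrow> ereal"
  assumes P: "prob_space P" and Q: "prob_space Q" and sQP: "sets Q = sets P"
    and ac: "absolutely_continuous P Q" and nu: "\<nu> > 0"
    and phi: "\<phi> = (\<lambda>x. epow (RN_deriv P Q x) \<nu>)"
    and Ldef: "L = elog (\<integral>\<^sup>+x. \<phi> x \<partial>Q)"
    and Fdef: "F = (\<lambda>c. uadd (ereal (1 / c) * elog (\<integral>\<^sup>+x. epow (\<phi> x) c \<partial>P))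
                          (ereal (1 / (c - 1)) * renyi (c / (c - 1)) Q P))"
  shows "(SUP \<tau> \<in> Tplus P (1 + 1 / \<nu>) \<phi>. elog (\<integral>\<^sup>+x. \<tau> x \<partial>Q)) = L
        \<and> L = (INF c \<in> {1<..}. F c)
        \<and> F (1 + 1 / \<nu>) = (INF c \<in> {1<..}. F c)
        \<and> L = ereal (\<nu> * (1 + \<nu>)) * renyi (1 + \<nu>) Q P"
proof -
  interpret P: prob_space P by fact
  interpret Q: prob_space Q by fact
  define f where "f = RN_deriv P Q"
  have nzg: "\<nu> \<noteq> 0" "1 + \<nu> \<noteq> 0" "\<nu> + \<nu> * \<nu> \<noteq> 0" using nu by (auto, smt (verit) mult_pos_pos)
  have fm: "f \<in> borel_measurable P" unfolding f_def by simp
  have intQ: "\<And>h. h \<in> borel_measurable P \<Longrightarrow> (\<integral>\<^sup>+x. h x \<partial>Q) = (\<integral>\<^sup>+x. f x * h x \<partial>P)"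
    unfolding f_def by (rule P.RN_deriv_nn_integral[OF ac sQP])
  have f1: "(\<integral>\<^sup>+x. f x \<partial>P) = 1"
    using intQ[of "\<lambda>_. 1"] by (simp add: Q.emeasure_space_1)
  have pw1: "\<And>y. y * epow y \<nu> = epow y (1 + \<nu>)"
    using epow_mult_same[of 1 \<nu>] nu by (simp add: epow_1)
  have pw2: "\<And>y. epow y \<nu> * y = epow y (1 + \<nu>)"
    using pw1 by (simp add: mult.commute)
  define I where "I = (\<integral>\<^sup>+x. epow (f x) (1 + \<nu>) \<partial>P)"
  have phif: "\<phi> = (\<lambda>x. epow (f x) \<nu>)" using phi f_def by simp
  have LI: "L = elog I"
  proof -
    have "(\<integral>\<^sup>+x. \<phi> x \<partial>Q) = (\<integral>\<^sup>+x. f x * epow (f x) \<nu> \<partial>P)"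
      unfolding phif using fm by (intro intQ) simp
    also have "\<dots> = I" unfolding I_def
      using pw1 by simp
    finally show ?thesis using Ldef by simp
  qed
  have I0: "I \<noteq> 0"
  proof
    assume "I = 0"
    then have "AE x in P. epow (f x) (1 + \<nu>) = 0" unfolding I_def using fm by (simp add: nn_integral_0_iff_AE)
    then have "AE x in P. f x = 0" using nu by (auto simp: epow_eq_0_iff elim: AE_mp)
    then have "(\<integral>\<^sup>+x. f x \<partial>P) = 0" using fm by (simp add: nn_integral_0_iff_AE)
    then show False using f1 by simp
  qed
  have beta: "\<nu> * (1 + 1 / \<nu>) = 1 + \<nu>" using nu by (simp add: distrib_left)
  have phibeta: "\<And>x. epow (\<phi> x) (1 + 1 / \<nu>) = epow (f x) (1 + \<nu>)"
    unfolding phif epow_compose beta ..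
  have Ibeta: "(\<integral>\<^sup>+x. epow (\<phi> x) (1 + 1 / \<nu>) \<partial>P) = I"
    unfolding phibeta I_def ..
  have pm: "\<phi> \<in> borel_measurable P" unfolding phif using fm by simp
  have A: "(SUP \<tau> \<in> Tplus P (1 + 1 / \<nu>) \<phi>. elog (\<integral>\<^sup>+x. \<tau> x \<partial>Q)) = L"
  proof (rule antisym)
    show "(SUP \<tau> \<in> Tplus P (1 + 1 / \<nu>) \<phi>. elog (\<integral>\<^sup>+x. \<tau> x \<partial>Q)) \<le> L"
    proof (rule SUP_least)
      fix \<tau> assume "\<tau> \<in> Tplus P (1 + 1 / \<nu>) \<phi>"
      then have tm: "\<tau> \<in> borel_measurable P"
        and tle: "(\<integral>\<^sup>+x. epow (\<tau> x) (1 + 1 / \<nu>) \<partial>P) \<le> I"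
        unfolding Tplus_def using Ibeta by auto
      define \<theta> where "\<theta> = \<nu> / (1 + \<nu>)"
      have nz: "\<nu> \<noteq> 0" "1 + \<nu> \<noteq> 0" "\<nu> + \<nu> * \<nu> \<noteq> 0" using nu by (auto, smt (verit) mult_pos_pos)
      have th: "0 < \<theta>" "\<theta> < 1" unfolding \<theta>_def using nu by (auto simp: field_simps)
      have e1: "(1 + 1 / \<nu>) * \<theta> = 1" unfolding \<theta>_def using nz by (simp add: field_simps)
      have e2: "(1 + \<nu>) * (1 - \<theta>) = 1" unfolding \<theta>_def using nz by (simp add: field_simps)
      have "(\<integral>\<^sup>+x. \<tau> x \<partial>Q) = (\<integral>\<^sup>+x. f x * \<tau> x \<partial>P)" using tm by (rule intQ)
      also have "\<dots> = (\<integral>\<^sup>+x. epow (epow (\<tau> x) (1 + 1 / \<nu>)) \<theta> * epow (epow (f x) (1 + \<nu>)) (1 - \<theta>) \<partial>P)"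
        unfolding epow_compose e1 e2 epow_1 by (simp add: mult.commute)
      also have "\<dots> \<le> epow (\<integral>\<^sup>+x. epow (\<tau> x) (1 + 1 / \<nu>) \<partial>P) \<theta> * epow I (1 - \<theta>)"
        unfolding I_def using tm fm th by (intro holder) auto
      also have "\<dots> \<le> epow I \<theta> * epow I (1 - \<theta>)"
        using tle th by (intro mult_right_mono epow_mono) auto
      also have "\<dots> = I" using th by (simp add: epow_mult_same epow_1)
      finally show "elog (\<integral>\<^sup>+x. \<tau> x \<partial>Q) \<le> L" unfolding LI by (rule elog_mono)
    qed
  next
    have "\<phi> \<in> Tplus P (1 + 1 / \<nu>) \<phi>" unfolding Tplus_def using pm by simp
    then have "elog (\<integral>\<^sup>+x. \<phi> x \<partial>Q) \<le> (SUP \<tau> \<in> Tplus P (1 + 1 / \<nu>) \<phi>. elog (\<integral>\<^sup>+x. \<tau> x \<partial>Q))"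
      by (rule SUP_upper)
    then show "L \<le> (SUP \<tau> \<in> Tplus P (1 + 1 / \<nu>) \<phi>. elog (\<integral>\<^sup>+x. \<tau> x \<partial>Q))" using Ldef by simp
  qed
  have Fc: "L \<le> F c" if c: "c > 1" for c
  proof -
    define c' where "c' = c / (c - 1)"
    have c'pos: "c' > 0" "c' \<noteq> 1" unfolding c'_def using c by (auto simp: field_simps)
    define J where "J = (\<integral>\<^sup>+x. epow (f x) c' \<partial>P)"
    define K where "K = (\<integral>\<^sup>+x. epow (\<phi> x) c \<partial>P)"
    have ren: "renyi c' Q P = ereal (1 / (c' * (c' - 1))) * elog J"
      unfolding J_def f_def using renyi_eq[OF P Q sQP ac c'pos] .
    have coef: "1 / (c - 1) * (1 / (c' * (c' - 1))) = 1 - 1 / c"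
      unfolding c'_def using c by (simp add: field_simps)
    have Fform: "F c = uadd (ereal (1 / c) * elog K) (ereal (1 - 1 / c) * elog J)"
      unfolding Fdef K_def c'_def[symmetric] ren using coef by (simp add: mult.assoc[symmetric])
    have th: "0 < 1 / c" "1 / c < 1" using c by auto
    have e1: "\<nu> * c * (1 / c) = \<nu>" using c by simp
    have e2: "c' * (1 - 1 / c) = 1" unfolding c'_def using c by (simp add: field_simps)
    have "I = (\<integral>\<^sup>+x. epow (epow (f x) (\<nu> * c)) (1 / c) * epow (epow (f x) c') (1 - 1 / c) \<partial>P)"
      unfolding I_def epow_compose e1 e2 epow_1 pw2 ..
    also have "\<dots> \<le> epow (\<integral>\<^sup>+x. epow (f x) (\<nu> * c) \<partial>P) (1 / c) * epow J (1 - 1 / c)"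
      unfolding J_def using fm th by (intro holder) auto
    also have "(\<integral>\<^sup>+x. epow (f x) (\<nu> * c) \<partial>P) = K"
      unfolding K_def phif epow_compose ..
    finally have "I \<le> epow K (1 / c) * epow J (1 - 1 / c)" .
    then have "elog I \<le> uadd (ereal (1 / c) * elog K) (ereal (1 - 1 / c) * elog J)"
      using I0 th by (intro logH_plus) auto
    then show ?thesis using LI Fform by simp
  qed
  have Fb: "F (1 + 1 / \<nu>) = L"
  proof -
    define c where "c = 1 + 1 / \<nu>"
    have c: "c > 1" unfolding c_def using nu by simp
    have cc: "c / (c - 1) = 1 + \<nu>" unfolding c_def using nu nzg by (simp add: field_simps)
    have ren: "renyi (1 + \<nu>) Q P = ereal (1 / ((1 + \<nu>) * \<nu>)) * elog I"
      unfolding I_def f_def using renyi_eq[OF P Q sQP ac, of "1 + \<nu>"] nu by simp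
    have coef: "1 / (c - 1) * (1 / ((1 + \<nu>) * \<nu>)) = 1 - 1 / c"
      unfolding c_def using nu nzg by (simp add: field_simps)
    have "F c = uadd (ereal (1 / c) * elog I) (ereal (1 - 1 / c) * elog I)"
      unfolding Fdef cc ren c_def[symmetric] Ibeta[folded c_def] using coef by (simp add: mult.assoc[symmetric])
    also have "\<dots> = elog I"
      using c I0 by (intro uadd_split elog_neq_minf) auto
    finally show ?thesis unfolding c_def LI .
  qed
  have Finf: "L = (INF c \<in> {1<..}. F c)"
  proof (rule antisym)
    show "L \<le> (INF c \<in> {1<..}. F c)" using Fc by (intro INF_greatest) auto
    have "(INF c \<in> {1<..}. F c) \<le> F (1 + 1 / \<nu>)" using nu by (intro INF_lower) simp
    then show "(INF c \<in> {1<..}. F c) \<le> L" using Fb by simp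
  qed
  have Lren: "L = ereal (\<nu> * (1 + \<nu>)) * renyi (1 + \<nu>) Q P"
  proof -
    have ren: "renyi (1 + \<nu>) Q P = ereal (1 / ((1 + \<nu>) * \<nu>)) * elog I"
      unfolding I_def f_def using renyi_eq[OF P Q sQP ac, of "1 + \<nu>"] nu by simp
    have "ereal (\<nu> * (1 + \<nu>)) * (ereal (1 / ((1 + \<nu>) * \<nu>)) * elog I) = elog I"
      using nu by (simp add: mult.assoc[symmetric])
    then show ?thesis using ren LI by simp
  qed
  show ?thesis using A Finf Fb Lren by simp
qed

lemma setup23:
  assumes P: "prob_space P" and Q: "prob_space Q" and sQP: "sets Q = sets P"
    and ac: "absolutely_continuous Q P"
  shows "RN_deriv Q P \<in> borel_measurable Q"
    and "\<And>h. h \<in> borel_measurable Q \<Longrightarrow> (\<integral>\<^sup>+x. h x \<partial>P) = (\<integral>\<^sup>+x. RN_deriv Q P x * h x \<partial>Q)"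
    and "(\<integral>\<^sup>+x. RN_deriv Q P x \<partial>Q) = 1"
    and "AE x in Q. RN_deriv Q P x \<noteq> top"
    and "\<And>\<alpha>. \<alpha> > 0 \<Longrightarrow> (\<integral>\<^sup>+x. epow (RN_deriv Q P x) \<alpha> \<partial>Q) \<noteq> 0"
    and "AE x in P. RN_deriv Q P x \<noteq> 0 \<and> RN_deriv Q P x \<noteq> top"
    and "\<And>h. h \<in> borel_measurable Q \<Longrightarrow> h \<in> borel_measurable P"
proof -
  interpret P: prob_space P by fact
  interpret Q: prob_space Q by fact
  have sPQ: "sets P = sets Q" using sQP by simp
  show gm: "RN_deriv Q P \<in> borel_measurable Q" by simp
  show intP: "\<And>h. h \<in> borel_measurable Q \<Longrightarrow> (\<integral>\<^sup>+x. h x \<partial>P) = (\<integral>\<^sup>+x. RN_deriv Q P x * h x \<partial>Q)"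
    by (rule Q.RN_deriv_nn_integral[OF ac sPQ])
  show g1: "(\<integral>\<^sup>+x. RN_deriv Q P x \<partial>Q) = 1"
    using intP[of "\<lambda>_. 1"] by (simp add: P.emeasure_space_1)
  show gfin: "AE x in Q. RN_deriv Q P x \<noteq> top"
    using Q.RN_deriv_finite[OF P.sigma_finite_measure_axioms ac sPQ] by simp
  show "\<And>\<alpha>. \<alpha> > 0 \<Longrightarrow> (\<integral>\<^sup>+x. epow (RN_deriv Q P x) \<alpha> \<partial>Q) \<noteq> 0"
  proof
    fix \<alpha> :: real assume a: "\<alpha> > 0" and "(\<integral>\<^sup>+x. epow (RN_deriv Q P x) \<alpha> \<partial>Q) = 0"
    then have "AE x in Q. epow (RN_deriv Q P x) \<alpha> = 0" by (simp add: nn_integral_0_iff_AE)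
    then have "AE x in Q. RN_deriv Q P x = 0" using a by (auto simp: epow_eq_0_iff elim: AE_mp)
    then have "(\<integral>\<^sup>+x. RN_deriv Q P x \<partial>Q) = 0" by (simp add: nn_integral_0_iff_AE)
    then show False using g1 by simp
  qed
  have Pd: "P = density Q (RN_deriv Q P)" using Q.density_RN_deriv[OF ac sPQ] by simp
  have "AE x in density Q (RN_deriv Q P). RN_deriv Q P x \<noteq> 0 \<and> RN_deriv Q P x \<noteq> top"
    using gfin by (subst AE_density) (auto elim: AE_mp)
  then show "AE x in P. RN_deriv Q P x \<noteq> 0 \<and> RN_deriv Q P x \<noteq> top" unfolding Pd[symmetric] .
  show "\<And>h. h \<in> borel_measurable Q \<Longrightarrow> h \<in> borel_measurable P"
    using measurable_cong_sets[OF sQP refl] by blast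
qed

lemma part23_G:
  fixes P Q :: "'a measure" and \<nu> :: real and \<rho> :: "'a \<Rightarrow> ennreal" and L :: ereal and G :: "real \<Rightarrow> ereal"
  assumes P: "prob_space P" and Q: "prob_space Q" and sQP: "sets Q = sets P"
    and ac: "absolutely_continuous Q P" and nu: "\<nu> > 0" "\<nu> \<noteq> 1"
    and rho: "\<rho> = (\<lambda>x. epow (RN_deriv Q P x) \<nu>)"
    and Ldef: "L = elog (\<integral>\<^sup>+x. \<rho> x \<partial>Q)"
    and Gdef: "G = (\<lambda>c. ladd (ereal (1 / c) * elog (\<integral>\<^sup>+x. epow (\<rho> x) c \<partial>P))
                          (- (ereal (1 / (1 - c)) * renyi (1 / (1 - c)) P Q)))"
    and Afin: "(\<integral>\<^sup>+x. epow (RN_deriv Q P x) \<nu> \<partial>Q) \<noteq> top"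
  shows "L = (SUP c \<in> {c. c < 1 \<and> c \<noteq> 0}. G c)
        \<and> G (1 - 1 / \<nu>) = (SUP c \<in> {c. c < 1 \<and> c \<noteq> 0}. G c)
        \<and> L = ereal (\<nu> * (\<nu> - 1)) * renyi \<nu> P Q"
proof -
  interpret P: prob_space P by fact
  interpret Q: prob_space Q by fact
  have sPQ: "sets P = sets Q" using sQP by simp
  define g where "g = RN_deriv Q P"
  note S = setup23[OF P Q sQP ac, folded g_def]
  have gm: "g \<in> borel_measurable Q" by (rule S(1))
  note intP = S(2) and gfin = S(4) and powpos = S(5) and mPQ = S(7)
  define A where "A = (\<integral>\<^sup>+x. epow (g x) \<nu> \<partial>Q)"
  have A0: "A \<noteq> 0" unfolding A_def using powpos nu by simp
  have Af: "A \<noteq> top" using Afin unfolding A_def g_def .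
  have LA: "L = elog A" unfolding Ldef rho A_def g_def ..
  have ren: "\<And>\<alpha>. \<alpha> > 0 \<Longrightarrow> \<alpha> \<noteq> 1 \<Longrightarrow> renyi \<alpha> P Q = ereal (1 / (\<alpha> * (\<alpha> - 1))) * elog (\<integral>\<^sup>+x. epow (g x) \<alpha> \<partial>Q)"
    unfolding g_def using renyi_eq[OF Q P sPQ ac] by blast
  define K where "K = (\<lambda>c. \<integral>\<^sup>+x. g x * epow (g x) (\<nu> * c) \<partial>Q)"
  define J where "J = (\<lambda>c. \<integral>\<^sup>+x. epow (g x) (1 / (1 - c)) \<partial>Q)"
  have Gform: "G c = ladd (ereal (1 / c) * elog (K c)) (- (ereal ((1 - c) / c) * elog (J c)))"
    if c: "c < 1" "c \<noteq> 0" for c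
  proof -
    have a: "1 / (1 - c) > 0" "1 / (1 - c) \<noteq> 1" using c by (auto simp: field_simps)
    have coef: "1 / (1 - c) * (1 / (1 / (1 - c) * (1 / (1 - c) - 1))) = (1 - c) / c"
      using c by (simp add: field_simps)
    have "(\<integral>\<^sup>+x. epow (\<rho> x) c \<partial>P) = (\<integral>\<^sup>+x. epow (g x) (\<nu> * c) \<partial>P)"
      unfolding rho g_def epow_compose ..
    also have "\<dots> = K c" unfolding K_def using gm by (intro intP) simp
    finally have e: "(\<integral>\<^sup>+x. epow (\<rho> x) c \<partial>P) = K c" .
    have Jc: "(\<integral>\<^sup>+x. epow (g x) (1 / (1 - c)) \<partial>Q) = J c" unfolding J_def ..
    show ?thesis unfolding Gdef e ren[OF a] Jc
      using coef by (simp add: mult.assoc[symmetric])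
  qed
  have Gle: "G c \<le> elog A" if c: "c < 1" "c \<noteq> 0" for c
  proof -
    have J0: "J c \<noteq> 0" unfolding J_def using c by (intro powpos) auto
    show ?thesis
    proof (cases "c > 0")
      case True
      have e2: "1 / (1 - c) * (1 - c) = 1" using c by simp
      have "K c = (\<integral>\<^sup>+x. epow (epow (g x) \<nu>) c * epow (epow (g x) (1 / (1 - c))) (1 - c) \<partial>Q)"
        unfolding K_def epow_compose e2 epow_1 by (simp add: mult.commute)
      also have "\<dots> \<le> epow A c * epow (J c) (1 - c)"
        unfolding A_def J_def using gm True c by (intro holder) auto
      finally have H: "K c \<le> epow A c * epow (J c) (1 - c)" .
      show ?thesis unfolding Gform[OF c] using logG1[OF A0 Af J0 True c(1) H] .
    next
      case False
      then have cn: "c < 0" using c by simp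
      define \<alpha> where "\<alpha> = 1 / (1 - c)"
      have al: "0 < \<alpha>" "\<alpha> < 1" unfolding \<alpha>_def using cn by (auto simp: field_simps)
      have ex: "(1 + \<nu> * c) * \<alpha> + \<nu> * (1 - \<alpha>) = \<alpha>"
        unfolding \<alpha>_def using cn by (simp add: field_simps)
      have "J c \<le> (\<integral>\<^sup>+x. epow (g x * epow (g x) (\<nu> * c)) \<alpha> * epow (epow (g x) \<nu>) (1 - \<alpha>) \<partial>Q)"
        unfolding J_def \<alpha>_def[symmetric]
      proof (rule nn_integral_mono_AE)
        show "AE x in Q. epow (g x) \<alpha> \<le> epow (g x * epow (g x) (\<nu> * c)) \<alpha> * epow (epow (g x) \<nu>) (1 - \<alpha>)"
          using gfin
        proof eventually_elim
          case (elim x)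
          show ?case
          proof (cases "g x = 0")
            case True then show ?thesis using al by (simp add: epow_zero)
          next
            case False
            have "g x * epow (g x) (\<nu> * c) = epow (g x) (1 + \<nu> * c)"
              using epow_mult_same_fin[OF elim False, of 1 "\<nu> * c"] by (simp add: epow_1)
            then have "epow (g x * epow (g x) (\<nu> * c)) \<alpha> * epow (epow (g x) \<nu>) (1 - \<alpha>)
                = epow (g x) ((1 + \<nu> * c) * \<alpha>) * epow (g x) (\<nu> * (1 - \<alpha>))"
              by (simp add: epow_compose)
            also have "\<dots> = epow (g x) \<alpha>"
              using epow_mult_same_fin[OF elim False] ex by simp
            finally show ?thesis by simp
          qed
        qed
      qed
      also have "\<dots> \<le> epow (K c) \<alpha> * epow A (1 - \<alpha>)"
        unfolding K_def A_def using gm al by (intro holder) auto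
      finally have H: "J c \<le> epow (K c) (1 / (1 - c)) * epow A (1 - 1 / (1 - c))"
        unfolding \<alpha>_def .
      show ?thesis unfolding Gform[OF c] using logG2[OF A0 Af J0 cn H] .
    qed
  qed
  define cs where "cs = 1 - 1 / \<nu>"
  have cs: "cs < 1" "cs \<noteq> 0" unfolding cs_def using nu by auto
  have Gcs: "G cs = elog A"
  proof -
    have e1: "\<nu> * cs = \<nu> - 1" unfolding cs_def using nu by (simp add: field_simps)
    have e2: "1 / (1 - cs) = \<nu>" unfolding cs_def using nu by simp
    have "K cs = A" unfolding K_def A_def e1
    proof (rule nn_integral_cong_AE)
      show "AE x in Q. g x * epow (g x) (\<nu> - 1) = epow (g x) \<nu>"
        using gfin
      proof eventually_elim
        case (elim x)
        show ?case
        proof (cases "g x = 0")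
          case True then show ?thesis using nu by (simp add: epow_zero)
        next
          case False
          show ?thesis using epow_mult_same_fin[OF elim False, of 1 "\<nu> - 1"] by (simp add: epow_1)
        qed
      qed
    qed
    moreover have "J cs = A" unfolding J_def A_def e2 ..
    ultimately have "G cs = ladd (ereal (1 / cs) * elog A) (- (ereal ((1 - cs) / cs) * elog A))"
      using Gform[OF cs] by simp
    also have "\<dots> = elog A"
      using A0 Af cs by (auto elim!: ennreal_finpos intro: ladd_split)
    finally show ?thesis .
  qed
  have SUPeq: "(SUP c \<in> {c. c < 1 \<and> c \<noteq> 0}. G c) = elog A"
  proof (rule antisym)
    show "(SUP c \<in> {c. c < 1 \<and> c \<noteq> 0}. G c) \<le> elog A" using Gle by (intro SUP_least) auto
    have "G cs \<le> (SUP c \<in> {c. c < 1 \<and> c \<noteq> 0}. G c)" using cs by (intro SUP_upper) auto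
    then show "elog A \<le> (SUP c \<in> {c. c < 1 \<and> c \<noteq> 0}. G c)" using Gcs by simp
  qed
  have Lren: "L = ereal (\<nu> * (\<nu> - 1)) * renyi \<nu> P Q"
  proof -
    have nz: "\<nu> * (\<nu> - 1) \<noteq> 0" using nu by simp
    have "ereal (\<nu> * (\<nu> - 1)) * (ereal (1 / (\<nu> * (\<nu> - 1))) * elog A) = elog A"
      using nz by (simp add: mult.assoc[symmetric])
    then show ?thesis using ren[OF nu] LA unfolding A_def by simp
  qed
  show ?thesis using SUPeq Gcs Lren LA unfolding cs_def by simp
qed

lemma gmul:
  fixes g :: "'a \<Rightarrow> ennreal"
  assumes gfin: "AE x in Q. g x \<noteq> top" and nu: "\<nu> > 0"
  shows "(\<integral>\<^sup>+x. g x * epow (g x) (\<nu> - 1) \<partial>Q) = (\<integral>\<^sup>+x. epow (g x) \<nu> \<partial>Q)"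
proof (rule nn_integral_cong_AE)
  show "AE x in Q. g x * epow (g x) (\<nu> - 1) = epow (g x) \<nu>"
    using gfin
  proof eventually_elim
    case (elim x)
    show ?case
    proof (cases "g x = 0")
      case True then show ?thesis using nu by (simp add: epow_zero)
    next
      case False
      show ?thesis using epow_mult_same_fin[OF elim False, of 1 "\<nu> - 1"] by (simp add: epow_1)
    qed
  qed
qed

lemma epow_finpos:
  assumes "x \<noteq> 0" "x \<noteq> top"
  shows "epow x c \<noteq> 0" "epow x c \<noteq> top"
proof -
  obtain r where r: "r > 0" "x = ennreal r" using assms ennreal_finpos by blast
  show "epow x c \<noteq> 0" "epow x c \<noteq> top" using r by (simp_all add: epow_ennreal)
qed

lemma part2_inf:
  fixes P Q :: "'a measure" and \<nu> :: real and \<rho> :: "'a \<Rightarrow> ennreal"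
  assumes P: "prob_space P" and Q: "prob_space Q" and sQP: "sets Q = sets P"
    and ac: "absolutely_continuous Q P" and nu: "\<nu> > 1"
    and rho: "\<rho> = (\<lambda>x. epow (RN_deriv Q P x) \<nu>)"
    and Afin: "(\<integral>\<^sup>+x. epow (RN_deriv Q P x) \<nu> \<partial>Q) \<noteq> top"
  shows "(INF \<tau> \<in> Tminus P (1 - 1 / \<nu>) \<rho>. elog (\<integral>\<^sup>+x. \<tau> x \<partial>Q)) = elog (\<integral>\<^sup>+x. \<rho> x \<partial>Q)"
proof -
  define g where "g = RN_deriv Q P"
  note S = setup23[OF P Q sQP ac, folded g_def]
  have gm: "g \<in> borel_measurable Q" by (rule S(1))
  note intP = S(2) and gfin = S(4) and powpos = S(5) and mPQ = S(7)
  have mQP: "\<And>h. h \<in> borel_measurable P \<Longrightarrow> h \<in> borel_measurable Q"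
    using measurable_cong_sets[OF sQP refl] by blast
  define A where "A = (\<integral>\<^sup>+x. epow (g x) \<nu> \<partial>Q)"
  have A0: "A \<noteq> 0" unfolding A_def using powpos nu by simp
  have Af: "A \<noteq> top" using Afin unfolding A_def g_def .
  have LA: "(\<integral>\<^sup>+x. \<rho> x \<partial>Q) = A" unfolding rho A_def g_def ..
  define \<beta> where "\<beta> = 1 - 1 / \<nu>"
  have b: "0 < \<beta>" "\<beta> < 1" unfolding \<beta>_def using nu by auto
  have e1: "\<nu> * \<beta> = \<nu> - 1" unfolding \<beta>_def using nu by (simp add: field_simps)
  have e2: "\<nu> * (1 - \<beta>) = 1" unfolding \<beta>_def using nu by simp
  have rb: "(\<integral>\<^sup>+x. epow (\<rho> x) \<beta> \<partial>P) = A"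
  proof -
    have "(\<integral>\<^sup>+x. epow (\<rho> x) \<beta> \<partial>P) = (\<integral>\<^sup>+x. g x * epow (g x) (\<nu> - 1) \<partial>Q)"
      unfolding rho g_def[symmetric] epow_compose e1 using gm by (intro intP) simp
    also have "\<dots> = A" unfolding A_def using gmul[OF gfin] nu by simp
    finally show ?thesis .
  qed
  have rm: "\<rho> \<in> borel_measurable P" unfolding rho g_def[symmetric] by (intro mPQ measurable_epow gm)
  show ?thesis
  proof (rule antisym)
    have "\<rho> \<in> Tminus P (1 - 1 / \<nu>) \<rho>" unfolding Tminus_def using rm by simp
    then show "(INF \<tau> \<in> Tminus P (1 - 1 / \<nu>) \<rho>. elog (\<integral>\<^sup>+x. \<tau> x \<partial>Q)) \<le> elog (\<integral>\<^sup>+x. \<rho> x \<partial>Q)"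
      by (rule INF_lower)
  next
    show "elog (\<integral>\<^sup>+x. \<rho> x \<partial>Q) \<le> (INF \<tau> \<in> Tminus P (1 - 1 / \<nu>) \<rho>. elog (\<integral>\<^sup>+x. \<tau> x \<partial>Q))"
    proof (rule INF_greatest)
      fix \<tau> assume "\<tau> \<in> Tminus P (1 - 1 / \<nu>) \<rho>"
      then have tm: "\<tau> \<in> borel_measurable P"
        and tle: "A \<le> (\<integral>\<^sup>+x. epow (\<tau> x) \<beta> \<partial>P)"
        unfolding Tminus_def \<beta>_def[symmetric] using rb by auto
      have tmQ: "\<tau> \<in> borel_measurable Q" using tm mQP by blast
      have "A \<le> (\<integral>\<^sup>+x. epow (\<tau> x) \<beta> \<partial>P)" by (rule tle)
      also have "\<dots> = (\<integral>\<^sup>+x. g x * epow (\<tau> x) \<beta> \<partial>Q)" using tmQ by (intro intP) simp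
      also have "\<dots> = (\<integral>\<^sup>+x. epow (\<tau> x) \<beta> * epow (epow (g x) \<nu>) (1 - \<beta>) \<partial>Q)"
        unfolding epow_compose e2 epow_1 by (simp add: mult.commute)
      also have "\<dots> \<le> epow (\<integral>\<^sup>+x. \<tau> x \<partial>Q) \<beta> * epow A (1 - \<beta>)"
        unfolding A_def using tmQ gm b by (intro holder) auto
      finally have "A \<le> (\<integral>\<^sup>+x. \<tau> x \<partial>Q)" by (rule ge_from_holder[OF A0 Af b])
      then show "elog (\<integral>\<^sup>+x. \<rho> x \<partial>Q) \<le> elog (\<integral>\<^sup>+x. \<tau> x \<partial>Q)" unfolding LA by (rule elog_mono)
    qed
  qed
qed

lemma part3_Afin:
  assumes P: "prob_space P" and Q: "prob_space Q" and sQP: "sets Q = sets P"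
    and ac: "absolutely_continuous Q P" and nu: "0 < \<nu>" "\<nu> < 1"
  shows "(\<integral>\<^sup>+x. epow (RN_deriv Q P x) \<nu> \<partial>Q) \<noteq> top"
proof -
  interpret Q: prob_space Q by fact
  note S = setup23[OF P Q sQP ac]
  have "(\<integral>\<^sup>+x. epow (RN_deriv Q P x) \<nu> \<partial>Q) = (\<integral>\<^sup>+x. epow (RN_deriv Q P x) \<nu> * epow ((\<lambda>_. 1) x) (1 - \<nu>) \<partial>Q)"
    by (simp add: epow_base1)
  also have "\<dots> \<le> epow (\<integral>\<^sup>+x. RN_deriv Q P x \<partial>Q) \<nu> * epow (\<integral>\<^sup>+x. 1 \<partial>Q) (1 - \<nu>)"
    using nu S(1) by (intro holder) auto
  also have "\<dots> = 1" using S(3) by (simp add: Q.emeasure_space_1 epow_base1)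
  finally show ?thesis by (auto simp: top_unique)
qed

lemma part3_inf:
  fixes P Q :: "'a measure" and \<nu> :: real and \<rho> :: "'a \<Rightarrow> ennreal"
  assumes P: "prob_space P" and Q: "prob_space Q" and sQP: "sets Q = sets P"
    and ac: "absolutely_continuous Q P" and nu: "0 < \<nu>" "\<nu> < 1"
    and rho: "\<rho> = (\<lambda>x. epow (RN_deriv Q P x) \<nu>)"
  shows "(INF \<tau> \<in> Tplus P (1 - 1 / \<nu>) \<rho>. elog (\<integral>\<^sup>+x. \<tau> x \<partial>Q)) = elog (\<integral>\<^sup>+x. \<rho> x \<partial>Q)"
proof -
  define g where "g = RN_deriv Q P"
  note S = setup23[OF P Q sQP ac, folded g_def]
  have gm: "g \<in> borel_measurable Q" by (rule S(1))
  note intP = S(2) and gfin = S(4) and powpos = S(5) and mPQ = S(7)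
  have mQP: "\<And>h. h \<in> borel_measurable P \<Longrightarrow> h \<in> borel_measurable Q"
    using measurable_cong_sets[OF sQP refl] by blast
  define A where "A = (\<integral>\<^sup>+x. epow (g x) \<nu> \<partial>Q)"
  have A0: "A \<noteq> 0" unfolding A_def using powpos nu by simp
  have Af: "A \<noteq> top" using part3_Afin[OF P Q sQP ac nu] unfolding A_def g_def .
  have LA: "(\<integral>\<^sup>+x. \<rho> x \<partial>Q) = A" unfolding rho A_def g_def ..
  define \<beta> where "\<beta> = 1 - 1 / \<nu>"
  have b: "\<beta> < 0" unfolding \<beta>_def using nu by (simp add: field_simps)
  have e1: "\<nu> * \<beta> = \<nu> - 1" unfolding \<beta>_def using nu by (simp add: field_simps)
  have e1': "\<beta> * \<nu> = \<nu> - 1" using e1 by (simp add: mult.commute)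
  have rb: "(\<integral>\<^sup>+x. epow (\<rho> x) \<beta> \<partial>P) = A"
  proof -
    have "(\<integral>\<^sup>+x. epow (\<rho> x) \<beta> \<partial>P) = (\<integral>\<^sup>+x. g x * epow (g x) (\<nu> - 1) \<partial>Q)"
      unfolding rho g_def[symmetric] epow_compose e1 using gm by (intro intP) simp
    also have "\<dots> = A" unfolding A_def using gmul[OF gfin] nu by simp
    finally show ?thesis .
  qed
  have rm: "\<rho> \<in> borel_measurable P" unfolding rho g_def[symmetric] by (intro mPQ measurable_epow gm)
  show ?thesis
  proof (rule antisym)
    have "\<rho> \<in> Tplus P (1 - 1 / \<nu>) \<rho>" unfolding Tplus_def using rm by simp
    then show "(INF \<tau> \<in> Tplus P (1 - 1 / \<nu>) \<rho>. elog (\<integral>\<^sup>+x. \<tau> x \<partial>Q)) \<le> elog (\<integral>\<^sup>+x. \<rho> x \<partial>Q)"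
      by (rule INF_lower)
  next
    show "elog (\<integral>\<^sup>+x. \<rho> x \<partial>Q) \<le> (INF \<tau> \<in> Tplus P (1 - 1 / \<nu>) \<rho>. elog (\<integral>\<^sup>+x. \<tau> x \<partial>Q))"
    proof (rule INF_greatest)
      fix \<tau> assume "\<tau> \<in> Tplus P (1 - 1 / \<nu>) \<rho>"
      then have tm: "\<tau> \<in> borel_measurable P"
        and tle: "(\<integral>\<^sup>+x. epow (\<tau> x) \<beta> \<partial>P) \<le> A"
        unfolding Tplus_def \<beta>_def[symmetric] using rb by auto
      have tmQ: "\<tau> \<in> borel_measurable Q" using tm mQP by blast
      have "A \<le> (\<integral>\<^sup>+x. \<tau> x \<partial>Q)"
      proof (cases "(\<integral>\<^sup>+x. \<tau> x \<partial>Q) = top")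
        case True then show ?thesis by simp
      next
        case False
        have tfin: "AE x in Q. \<tau> x \<noteq> top" using nn_integral_PInf_AE[OF tmQ] False by simp
        define M' where "M' = (\<integral>\<^sup>+x. g x * epow (\<tau> x) \<beta> \<partial>Q)"
        have M'eq: "M' = (\<integral>\<^sup>+x. epow (\<tau> x) \<beta> \<partial>P)" unfolding M'_def using tmQ by (intro intP[symmetric]) simp
        have M'le: "M' \<le> A" using tle M'eq by simp
        then have "M' \<noteq> top" using Af by (auto simp: top_unique)
        then have mfin: "AE x in Q. g x * epow (\<tau> x) \<beta> \<noteq> top"
          using nn_integral_PInf_AE[of "\<lambda>x. g x * epow (\<tau> x) \<beta>" Q] gm tmQ unfolding M'_def by simp
        have "A \<le> (\<integral>\<^sup>+x. epow (\<tau> x) (1 - \<nu>) * epow (g x * epow (\<tau> x) \<beta>) (1 - (1 - \<nu>)) \<partial>Q)"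
          unfolding A_def
        proof (rule nn_integral_mono_AE)
          show "AE x in Q. epow (g x) \<nu> \<le> epow (\<tau> x) (1 - \<nu>) * epow (g x * epow (\<tau> x) \<beta>) (1 - (1 - \<nu>))"
            using gfin tfin mfin
          proof eventually_elim
            case (elim x)
            show ?case
            proof (cases "g x = 0")
              case True then show ?thesis using nu by (simp add: epow_zero)
            next
              case g0: False
              have et: "epow (\<tau> x) \<beta> \<noteq> top"
              proof
                assume "epow (\<tau> x) \<beta> = top"
                then have "g x * epow (\<tau> x) \<beta> = top" using g0 by (simp add: ennreal_mult_eq_top_iff)
                then show False using elim(3) by simp
              qed
              have t0: "\<tau> x \<noteq> 0"
              proof
                assume "\<tau> x = 0" then have "epow (\<tau> x) \<beta> = top" using b by (simp add: epow_zero)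
                then show False using et by simp
              qed
              have ef: "epow (\<tau> x) \<beta> \<noteq> 0" using epow_finpos[OF t0 elim(2)] by simp
              have "epow (g x * epow (\<tau> x) \<beta>) \<nu> = epow (g x) \<nu> * epow (\<tau> x) (\<beta> * \<nu>)"
                using epow_mult_fin[OF elim(1) g0 et ef] by (simp add: epow_compose)
              then have "epow (\<tau> x) (1 - \<nu>) * epow (g x * epow (\<tau> x) \<beta>) (1 - (1 - \<nu>))
                  = epow (g x) \<nu> * (epow (\<tau> x) (1 - \<nu>) * epow (\<tau> x) (\<nu> - 1))"
                unfolding e1' by (simp add: ac_simps)
              also have "epow (\<tau> x) (1 - \<nu>) * epow (\<tau> x) (\<nu> - 1) = 1"
                using epow_mult_same_fin[OF elim(2) t0, of "1 - \<nu>" "\<nu> - 1"] by (simp add: epow_def)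
              finally show ?thesis by simp
            qed
          qed
        qed
        also have "\<dots> \<le> epow (\<integral>\<^sup>+x. \<tau> x \<partial>Q) (1 - \<nu>) * epow M' (1 - (1 - \<nu>))"
          unfolding M'_def using tmQ gm nu by (intro holder) auto
        also have "\<dots> \<le> epow (\<integral>\<^sup>+x. \<tau> x \<partial>Q) (1 - \<nu>) * epow A (1 - (1 - \<nu>))"
          using M'le nu by (intro mult_left_mono epow_mono) auto
        finally have H: "A \<le> epow (\<integral>\<^sup>+x. \<tau> x \<partial>Q) (1 - \<nu>) * epow A (1 - (1 - \<nu>))" .
        show ?thesis using nu by (intro ge_from_holder[OF A0 Af _ _ H]) auto
      qed
      then show "elog (\<integral>\<^sup>+x. \<rho> x \<partial>Q) \<le> elog (\<integral>\<^sup>+x. \<tau> x \<partial>Q)" unfolding LA by (rule elog_mono)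
    qed
  qed
qed

theorem mainTheorem14:
  fixes P Q :: "'a measure"
  assumes "prob_space P" and "prob_space Q" and "sets Q = sets P"
  shows
   "(\<forall>\<nu>::real. absolutely_continuous P Q \<and> \<nu> > 0 \<longrightarrow>
      (let \<phi> = (\<lambda>x. epow (RN_deriv P Q x) \<nu>);
           L = elog (\<integral>\<^sup>+x. \<phi> x \<partial>Q);
           F = (\<lambda>c. uadd (ereal (1 / c) * elog (\<integral>\<^sup>+x. epow (\<phi> x) c \<partial>P))
                          (ereal (1 / (c - 1)) * renyi (c / (c - 1)) Q P))
       in (SUP \<tau> \<in> Tplus P (1 + 1 / \<nu>) \<phi>. elog (\<integral>\<^sup>+x. \<tau> x \<partial>Q)) = L
        \<and> L = (INF c \<in> {1<..}. F c)
        \<and> F (1 + 1 / \<nu>) = (INF c \<in> {1<..}. F c)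
        \<and> L = ereal (\<nu> * (1 + \<nu>)) * renyi (1 + \<nu>) Q P))
  \<and> (\<forall>\<nu>::real. absolutely_continuous Q P \<and> \<nu> > 1
        \<and> (\<integral>\<^sup>+x. epow (RN_deriv Q P x) (\<nu> - 1) \<partial>P) < \<infinity> \<longrightarrow>
      (let \<rho> = (\<lambda>x. epow (RN_deriv Q P x) \<nu>);
           L = elog (\<integral>\<^sup>+x. \<rho> x \<partial>Q);
           G = (\<lambda>c. ladd (ereal (1 / c) * elog (\<integral>\<^sup>+x. epow (\<rho> x) c \<partial>P))
                          (- (ereal (1 / (1 - c)) * renyi (1 / (1 - c)) P Q)))
       in (INF \<tau> \<in> Tminus P (1 - 1 / \<nu>) \<rho>. elog (\<integral>\<^sup>+x. \<tau> x \<partial>Q)) = L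
        \<and> L = (SUP c \<in> {c. c < 1 \<and> c \<noteq> 0}. G c)
        \<and> G (1 - 1 / \<nu>) = (SUP c \<in> {c. c < 1 \<and> c \<noteq> 0}. G c)
        \<and> L = ereal (\<nu> * (\<nu> - 1)) * renyi \<nu> P Q))
  \<and> (\<forall>\<nu>::real. absolutely_continuous Q P \<and> 0 < \<nu> \<and> \<nu> < 1 \<longrightarrow>
      (let \<rho> = (\<lambda>x. epow (RN_deriv Q P x) \<nu>);
           L = elog (\<integral>\<^sup>+x. \<rho> x \<partial>Q);
           G = (\<lambda>c. ladd (ereal (1 / c) * elog (\<integral>\<^sup>+x. epow (\<rho> x) c \<partial>P))
                          (- (ereal (1 / (1 - c)) * renyi (1 / (1 - c)) P Q)))
       in (INF \<tau> \<in> Tplus P (1 - 1 / \<nu>) \<rho>. elog (\<integral>\<^sup>+x. \<tau> x \<partial>Q)) = L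
        \<and> L = (SUP c \<in> {c. c < 1 \<and> c \<noteq> 0}. G c)
        \<and> G (1 - 1 / \<nu>) = (SUP c \<in> {c. c < 1 \<and> c \<noteq> 0}. G c)
        \<and> L = ereal (\<nu> * (\<nu> - 1)) * renyi \<nu> P Q))"
proof (intro conjI allI impI)
  note P = assms(1) and Q = assms(2) and sQP = assms(3)
  fix \<nu> :: real
  assume h: "absolutely_continuous P Q \<and> \<nu> > 0"
  show "let \<phi> = (\<lambda>x. epow (RN_deriv P Q x) \<nu>);
           L = elog (\<integral>\<^sup>+x. \<phi> x \<partial>Q);
           F = (\<lambda>c. uadd (ereal (1 / c) * elog (\<integral>\<^sup>+x. epow (\<phi> x) c \<partial>P))
                          (ereal (1 / (c - 1)) * renyi (c / (c - 1)) Q P))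
       in (SUP \<tau> \<in> Tplus P (1 + 1 / \<nu>) \<phi>. elog (\<integral>\<^sup>+x. \<tau> x \<partial>Q)) = L
        \<and> L = (INF c \<in> {1<..}. F c)
        \<and> F (1 + 1 / \<nu>) = (INF c \<in> {1<..}. F c)
        \<and> L = ereal (\<nu> * (1 + \<nu>)) * renyi (1 + \<nu>) Q P"
    unfolding Let_def using h by (intro part1_core[OF P Q sQP _ _ refl refl refl]) auto
next
  note P = assms(1) and Q = assms(2) and sQP = assms(3)
  fix \<nu> :: real
  assume h: "absolutely_continuous Q P \<and> \<nu> > 1
        \<and> (\<integral>\<^sup>+x. epow (RN_deriv Q P x) (\<nu> - 1) \<partial>P) < \<infinity>"
  then have ac: "absolutely_continuous Q P" and nu: "\<nu> > 1" by auto
  have Afin: "(\<integral>\<^sup>+x. epow (RN_deriv Q P x) \<nu> \<partial>Q) \<noteq> top"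
  proof -
    note S = setup23[OF P Q sQP ac]
    have "(\<integral>\<^sup>+x. epow (RN_deriv Q P x) (\<nu> - 1) \<partial>P) = (\<integral>\<^sup>+x. RN_deriv Q P x * epow (RN_deriv Q P x) (\<nu> - 1) \<partial>Q)"
      using S(1) by (intro S(2)) simp
    also have "\<dots> = (\<integral>\<^sup>+x. epow (RN_deriv Q P x) \<nu> \<partial>Q)" using gmul[OF S(4)] nu by simp
    finally show ?thesis using h by (auto simp: top_unique)
  qed
  show "let \<rho> = (\<lambda>x. epow (RN_deriv Q P x) \<nu>);
           L = elog (\<integral>\<^sup>+x. \<rho> x \<partial>Q);
           G = (\<lambda>c. ladd (ereal (1 / c) * elog (\<integral>\<^sup>+x. epow (\<rho> x) c \<partial>P))
                          (- (ereal (1 / (1 - c)) * renyi (1 / (1 - c)) P Q)))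
       in (INF \<tau> \<in> Tminus P (1 - 1 / \<nu>) \<rho>. elog (\<integral>\<^sup>+x. \<tau> x \<partial>Q)) = L
        \<and> L = (SUP c \<in> {c. c < 1 \<and> c \<noteq> 0}. G c)
        \<and> G (1 - 1 / \<nu>) = (SUP c \<in> {c. c < 1 \<and> c \<noteq> 0}. G c)
        \<and> L = ereal (\<nu> * (\<nu> - 1)) * renyi \<nu> P Q"
    unfolding Let_def
    using part2_inf[OF P Q sQP ac nu refl Afin]
      part23_G[OF P Q sQP ac _ _ refl refl refl Afin] nu by auto
next
  note P = assms(1) and Q = assms(2) and sQP = assms(3)
  fix \<nu> :: real
  assume h: "absolutely_continuous Q P \<and> 0 < \<nu> \<and> \<nu> < 1"
  then have ac: "absolutely_continuous Q P" and nu: "0 < \<nu>" "\<nu> < 1" by auto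
  have Afin: "(\<integral>\<^sup>+x. epow (RN_deriv Q P x) \<nu> \<partial>Q) \<noteq> top"
    by (rule part3_Afin[OF P Q sQP ac nu])
  show "let \<rho> = (\<lambda>x. epow (RN_deriv Q P x) \<nu>);
           L = elog (\<integral>\<^sup>+x. \<rho> x \<partial>Q);
           G = (\<lambda>c. ladd (ereal (1 / c) * elog (\<integral>\<^sup>+x. epow (\<rho> x) c \<partial>P))
                          (- (ereal (1 / (1 - c)) * renyi (1 / (1 - c)) P Q)))
       in (INF \<tau> \<in> Tplus P (1 - 1 / \<nu>) \<rho>. elog (\<integral>\<^sup>+x. \<tau> x \<partial>Q)) = L
        \<and> L = (SUP c \<in> {c. c < 1 \<and> c \<noteq> 0}. G c)
        \<and> G (1 - 1 / \<nu>) = (SUP c \<in> {c. c < 1 \<and> c \<noteq> 0}. G c)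
        \<and> L = ereal (\<nu> * (\<nu> - 1)) * renyi \<nu> P Q"
    unfolding Let_def
    using part3_inf[OF P Q sQP ac nu refl]
      part23_G[OF P Q sQP ac _ _ refl refl refl Afin] nu by auto
qed

end
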